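(* For every forward trie $\mathsf{T}_f$ with $n$ nodes, over any alphabet, the suffix tree $\mathsf{STree}(\mathsf{T}_f)$ has $O(n^2)$ nodes and $O(n^2)$ edges. Moreover, there exist forward tries $\mathsf{T}_f$ with $n$ nodes, for arbitrarily large $n$ and over an alphabet of constant size, such that $\mathsf{STree}(\mathsf{T}_f)$ has $\Omega(n^2)$ nodes and $\Omega(n^2)$ edges.
   Context: An alphabet $\Sigma$ is a finite ordered set of characters, and $\sigma=|\Sigma|$. A forward trie $\mathsf{T}_f$ is a rooted tree with $n$ nodes in which every edge is directed from parent to child and labeled by a single character of $\Sigma$, such that the edges leaving any node carry pairwise distinct labels. For nodes $u,v$ with $u$ an ancestor of $v$ (possibly $u=v$), $\mathrm{str}_f(u,v)$ is the string of labels read along the downward path from $u$ to $v$. Define $\mathrm{Suffix}(\mathsf{T}_f)=\{\mathrm{str}_f(u,\ell): \ell \text{ a leaf},\ u \text{ an ancestor of } \ell\}$. For a finite set $S$ of strings, its compact tree is obtained from the trie of all prefixes of strings in $S$ (one node per prefix, the root being the empty string, an edge labeled $a$ from $X$ to $Xa$) by deleting every non-root node that has exactly one child and merging its two incident edges into one edge labeled by the concatenation of their labels. The suffix tree $\mathsf{STree}(\mathsf{T}_f)$ is the compact tree of $\mathrm{Suffix}(\mathsf{T}_f)$. *)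

theory Defs
  imports Complex_Main
begin

text \<open>Strings are lists of characters; characters are natural numbers, so that any
finite alphabet (up to renaming) is a finite set \<Sigma> of naturals.
A forward trie over \<Sigma> is represented by the set of strings spelled from the
root to its nodes (each node is identified with its root-to-node string):
a finite, nonempty, prefix-closed set of strings over \<Sigma>.  Distinctness of
outgoing labels is built in, since a node is determined by its string.\<close>

definition is_trie :: "nat set \<Rightarrow> nat list set \<Rightarrow> bool" where
  "is_trie \<Sigma> T \<longleftrightarrow> finite \<Sigma> \<and> finite T \<and> [] \<in> T \<and> T \<subseteq> lists \<Sigma> \<and>
     (\<forall>xs\<in>T. \<forall>k. take k xs \<in> T)"

definition trie_leaves :: "nat list set \<Rightarrow> nat list set" where
  "trie_leaves T = {l \<in> T. \<forall>a. l @ [a] \<notin> T}"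

text \<open>Suffix(T): labels of downward paths from an ancestor u of a leaf l to l,
i.e. the suffixes drop (length u) l of leaf strings.\<close>
definition trie_suffixes :: "nat list set \<Rightarrow> nat list set" where
  "trie_suffixes T = {drop (length u) l | u l. l \<in> trie_leaves T \<and> u \<in> T \<and> take (length u) l = u}"

definition prefixes_of :: "'a list set \<Rightarrow> 'a list set" where
  "prefixes_of S = {take k s | s k. s \<in> S}"

definition pchildren :: "'a list set \<Rightarrow> 'a list \<Rightarrow> 'a set" where
  "pchildren S X = {a. X @ [a] \<in> prefixes_of S}"

definition ct_nodes :: "'a list set \<Rightarrow> 'a list set" where
  "ct_nodes S = {X \<in> prefixes_of S. X = [] \<or> card (pchildren S X) \<noteq> 1}"

definition strict_pre :: "'a list \<Rightarrow> 'a list \<Rightarrow> bool" where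
  "strict_pre X Y \<longleftrightarrow> length X < length Y \<and> take (length X) Y = X"

text \<open>Edges of the compact tree: (X,Y) with X the nearest surviving proper
ancestor of surviving node Y (the edge is labelled drop (length X) Y).\<close>
definition ct_edges :: "'a list set \<Rightarrow> ('a list \<times> 'a list) set" where
  "ct_edges S = {(X, Y). X \<in> ct_nodes S \<and> Y \<in> ct_nodes S \<and> strict_pre X Y \<and>
      (\<forall>Z\<in>ct_nodes S. \<not> (strict_pre X Z \<and> strict_pre Z Y))}"

definition stree_nodes :: "nat list set \<Rightarrow> nat list set" where
  "stree_nodes T = ct_nodes (trie_suffixes T)"

definition stree_edges :: "nat list set \<Rightarrow> (nat list \<times> nat list) set" where
  "stree_edges T = ct_edges (trie_suffixes T)"

end

theory Submission
  imports Defs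
begin

lemma pref_sub:
  assumes "is_trie \<Sigma> T"
  shows "prefixes_of (trie_suffixes T) \<subseteq> (\<lambda>(u,v). drop (length u) v) ` (T \<times> T)"
proof
  fix x assume "x \<in> prefixes_of (trie_suffixes T)"
  then obtain k u l where x: "x = take k (drop (length u) l)" and l: "l \<in> trie_leaves T"
    and u: "u \<in> T"
    unfolding prefixes_of_def trie_suffixes_def by blast
  have lT: "l \<in> T" using l unfolding trie_leaves_def by auto
  have "take (k + length u) l \<in> T" using assms lT unfolding is_trie_def by blast
  moreover have "x = drop (length u) (take (k + length u) l)" using x by (simp add: take_drop)
  ultimately show "x \<in> (\<lambda>(u,v). drop (length u) v) ` (T \<times> T)" using u by force
qed

lemma fin_nodes:
  assumes "is_trie \<Sigma> T"
  shows "finite (ct_nodes (trie_suffixes T))"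
proof -
  have "finite T" using assms unfolding is_trie_def by auto
  hence "finite (prefixes_of (trie_suffixes T))"
    using pref_sub[OF assms] by (meson finite_SigmaI finite_imageI finite_subset)
  thus ?thesis unfolding ct_nodes_def by auto
qed

lemma card_nodes_le:
  assumes "is_trie \<Sigma> T"
  shows "card (ct_nodes (trie_suffixes T)) \<le> (card T)^2"
proof -
  have fT: "finite T" using assms unfolding is_trie_def by auto
  have "card (ct_nodes (trie_suffixes T)) \<le> card (prefixes_of (trie_suffixes T))"
    apply (rule card_mono)
    using pref_sub[OF assms] fT apply (meson finite_SigmaI finite_imageI finite_subset)
    unfolding ct_nodes_def by auto
  also have "\<dots> \<le> card ((\<lambda>(u,v). drop (length u) v) ` (T \<times> T))"
    apply (rule card_mono) using fT pref_sub[OF assms] by auto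
  also have "\<dots> \<le> card (T \<times> T)" by (rule card_image_le) (use fT in auto)
  also have "\<dots> = (card T)^2" by (simp add: card_cartesian_product power2_eq_square)
  finally show ?thesis .
qed

lemma edges_inj: "inj_on snd (ct_edges S)"
proof (rule inj_onI)
  fix p q assume p: "p \<in> ct_edges S" and q: "q \<in> ct_edges S" and e: "snd p = snd q"
  obtain X Y where pXY: "p = (X, Y)" by (cases p)
  obtain X' where qX: "q = (X', Y)" using e pXY by (cases q) auto
  have h1: "X \<in> ct_nodes S" "strict_pre X Y" "\<forall>Z\<in>ct_nodes S. \<not> (strict_pre X Z \<and> strict_pre Z Y)"
    using p pXY unfolding ct_edges_def by auto
  have h2: "X' \<in> ct_nodes S" "strict_pre X' Y" "\<forall>Z\<in>ct_nodes S. \<not> (strict_pre X' Z \<and> strict_pre Z Y)"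
    using q qX unfolding ct_edges_def by auto
  have tX: "take (length X) Y = X" and tX': "take (length X') Y = X'"
    using h1 h2 unfolding strict_pre_def by auto
  have "X = X'"
  proof (cases "length X < length X'")
    case True
    have "take (length X) X' = X" using tX tX' True
      by (metis min.strict_order_iff take_take)
    hence "strict_pre X X'" using True unfolding strict_pre_def by auto
    thus ?thesis using h1(3) h2(1,2) by blast
  next
    case False
    show ?thesis
    proof (cases "length X' < length X")
      case True
      have "take (length X') X = X'" using tX tX' True
        by (metis min.strict_order_iff take_take)
      hence "strict_pre X' X" using True unfolding strict_pre_def by auto
      thus ?thesis using h2(3) h1(1,2) by blast
    next
      case False
      then show ?thesis using \<open>\<not> length X < length X'\<close> tX tX' by (metis nat_neq_iff)
    qed
  qed
  thus "p = q" using pXY qX by simp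
qed

lemma card_edges_le_nodes:
  assumes "finite (ct_nodes S)"
  shows "card (ct_edges S) \<le> card (ct_nodes S)"
proof -
  have "card (ct_edges S) = card (snd ` ct_edges S)" by (rule card_image[OF edges_inj, symmetric])
  also have "\<dots> \<le> card (ct_nodes S)"
    apply (rule card_mono[OF assms]) unfolding ct_edges_def by auto
  finally show ?thesis .
qed

lemma fin_edges:
  assumes "finite (ct_nodes S)"
  shows "finite (ct_edges S)"
proof -
  have "ct_edges S \<subseteq> ct_nodes S \<times> ct_nodes S" unfolding ct_edges_def by auto
  thus ?thesis using assms by (meson finite_SigmaI finite_subset)
qed

lemma part1: "\<exists>c::nat. \<forall>\<Sigma> T. is_trie \<Sigma> T \<longrightarrow>
            card (stree_nodes T) \<le> c * (card T)^2 \<and>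
            card (stree_edges T) \<le> c * (card T)^2"
proof (rule exI[of _ 1], intro allI impI)
  fix \<Sigma> T assume a: "is_trie \<Sigma> T"
  have 1: "card (stree_nodes T) \<le> (card T)^2" unfolding stree_nodes_def by (rule card_nodes_le[OF a])
  have "card (stree_edges T) \<le> card (stree_nodes T)" unfolding stree_nodes_def stree_edges_def
    by (rule card_edges_le_nodes[OF fin_nodes[OF a]])
  with 1 show "card (stree_nodes T) \<le> 1 * (card T)^2 \<and> card (stree_edges T) \<le> 1 * (card T)^2" by simp
qed


definition Tm :: "nat \<Rightarrow> nat list set" where
  "Tm m = (\<lambda>k. replicate k 0) ` {0..m} \<union> (\<lambda>i. replicate m 0 @ replicate i 1) ` {0..m}
     \<union> (\<lambda>i. replicate m 0 @ replicate i 1 @ [2]) ` {0..m}"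

lemma Tm_trie: "is_trie {0,1,2} (Tm m)"
  unfolding is_trie_def
proof (intro conjI ballI allI)
  show "finite {0,1,2::nat}" by simp
  show "finite (Tm m)" unfolding Tm_def by auto
  show "[] \<in> Tm m" unfolding Tm_def by force
  show "Tm m \<subseteq> lists {0,1,2}" unfolding Tm_def by auto
  fix xs k assume "xs \<in> Tm m"
  then consider (a) j where "xs = replicate j 0" "j \<le> m"
    | (b) i where "xs = replicate m 0 @ replicate i 1" "i \<le> m"
    | (c) i where "xs = replicate m 0 @ replicate i 1 @ [2]" "i \<le> m"
    unfolding Tm_def by auto
  then show "take k xs \<in> Tm m"
  proof cases
    case (a j)
    then show ?thesis unfolding Tm_def by (auto simp: take_replicate)
  next
    case (b i)
    show ?thesis
    proof (cases "k \<le> m")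
      case True
      then show ?thesis using b unfolding Tm_def by (auto simp: take_replicate)
    next
      case False
      then show ?thesis using b unfolding Tm_def by (auto simp: take_replicate)
    qed
  next
    case (c i)
    show ?thesis
    proof (cases "k \<le> m")
      case True
      then show ?thesis using c unfolding Tm_def by (auto simp: take_replicate)
    next
      case False
      show ?thesis
      proof (cases "k - m \<le> i")
        case True
        then show ?thesis using c False unfolding Tm_def by (auto simp: take_replicate)
      next
        case F2: False
        then have "take k xs = xs" using c False by simp
        then show ?thesis using \<open>xs \<in> Tm m\<close> by simp
      qed
    qed
  qed
qed

lemma Tm_card_le: "card (Tm m) \<le> 3 * (m + 1)"
proof -
  have "card (Tm m) \<le> card ((\<lambda>k. replicate k (0::nat)) ` {0..m}) + card ((\<lambda>i. replicate m 0 @ replicate i (1::nat)) ` {0..m})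
     + card ((\<lambda>i. replicate m 0 @ replicate i 1 @ [2::nat]) ` {0..m})"
    unfolding Tm_def by (meson add_mono card_Un_le le_refl order_trans)
  also have "\<dots> \<le> (m+1) + (m+1) + (m+1)"
    by (intro add_mono) (auto intro: order_trans[OF card_image_le])
  finally show ?thesis by simp
qed

lemma Tm_card_ge: "m + 1 \<le> card (Tm m)"
proof -
  have "card ((\<lambda>k. replicate k (0::nat)) ` {0..m}) = m + 1"
    by (subst card_image) (auto simp: inj_on_def)
  moreover have "card ((\<lambda>k. replicate k (0::nat)) ` {0..m}) \<le> card (Tm m)"
    by (rule card_mono) (auto simp: Tm_def)
  ultimately show ?thesis by simp
qed

lemma Tm_nob2: "s \<in> Tm m \<Longrightarrow> 2 \<notin> set (butlast s)"
  unfolding Tm_def by (auto simp: butlast_append dest: in_set_butlastD)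

lemma Tm_leaf: "i \<le> m \<Longrightarrow> replicate m 0 @ replicate i 1 @ [2] \<in> trie_leaves (Tm m)"
  unfolding trie_leaves_def
proof (intro CollectI conjI allI)
  assume "i \<le> m"
  thus "replicate m 0 @ replicate i 1 @ [2] \<in> Tm m" unfolding Tm_def by auto
  fix a show "(replicate m 0 @ replicate i 1 @ [2]) @ [a] \<notin> Tm m"
  proof
    assume "(replicate m 0 @ replicate i 1 @ [2]) @ [a] \<in> Tm m"
    from Tm_nob2[OF this] show False by (simp add: butlast_append)
  qed
qed

lemma Tm_suf: "j \<le> m \<Longrightarrow> i \<le> m \<Longrightarrow> replicate j 0 @ replicate i 1 @ [2] \<in> trie_suffixes (Tm m)"
  unfolding trie_suffixes_def
proof (intro CollectI exI conjI)
  assume j: "j \<le> m" and i: "i \<le> m"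
  let ?u = "replicate (m - j) (0::nat)" and ?l = "replicate m 0 @ replicate i 1 @ [2::nat]"
  show "?l \<in> trie_leaves (Tm m)" using Tm_leaf[OF i] .
  show "?u \<in> Tm m" unfolding Tm_def by auto
  have "replicate m (0::nat) = ?u @ replicate j 0" using j by (simp add: replicate_add[symmetric])
  hence l: "?l = ?u @ (replicate j 0 @ replicate i 1 @ [2])" by simp
  show "take (length ?u) ?l = ?u" by (subst l) simp
  show "replicate j 0 @ replicate i 1 @ [2] = drop (length ?u) ?l" by (subst l) simp
qed

lemma card_ne1: "a \<in> A \<Longrightarrow> b \<in> A \<Longrightarrow> a \<noteq> b \<Longrightarrow> card A \<noteq> 1"
proof
  assume "a \<in> A" "b \<in> A" "a \<noteq> b" "card A = 1"
  then obtain x where "A = {x}" by (auto simp: card_1_singleton_iff)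
  with \<open>a \<in> A\<close> \<open>b \<in> A\<close> \<open>a \<noteq> b\<close> show False by simp
qed

lemma take_pref: "s \<in> S \<Longrightarrow> take k s \<in> prefixes_of S"
  unfolding prefixes_of_def by blast

lemma Tm_node: "j \<le> m \<Longrightarrow> i < m \<Longrightarrow> replicate j 0 @ replicate i 1 \<in> ct_nodes (trie_suffixes (Tm m))"
proof -
  assume j: "j \<le> m" and i: "i < m"
  let ?X = "replicate j (0::nat) @ replicate i 1"
  have s1: "?X @ [2] \<in> trie_suffixes (Tm m)" using Tm_suf[OF j, of i] i by simp
  have s2: "replicate j 0 @ replicate (Suc i) 1 @ [2] \<in> trie_suffixes (Tm m)" using Tm_suf[OF j, of "Suc i"] i by simp
  have p2: "?X @ [2] \<in> prefixes_of (trie_suffixes (Tm m))" using take_pref[OF s1, of "length ?X + 1"] by simp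
  have p1: "?X @ [1] \<in> prefixes_of (trie_suffixes (Tm m))" using take_pref[OF s2, of "length ?X + 1"]
    by (simp add: replicate_append_same[symmetric])
  have p0: "?X \<in> prefixes_of (trie_suffixes (Tm m))" using take_pref[OF s1, of "length ?X"] by simp
  have "card (pchildren (trie_suffixes (Tm m)) ?X) \<noteq> 1"
    by (rule card_ne1[of 1 _ 2]) (use p1 p2 in \<open>auto simp: pchildren_def\<close>)
  thus ?thesis using p0 unfolding ct_nodes_def by auto
qed

lemma ZR_inj: "inj_on (\<lambda>(j,i). replicate j (0::nat) @ replicate i 1) A"
proof (rule inj_onI, clarsimp)
  fix j i j' i' :: nat
  assume e: "replicate j 0 @ replicate i (Suc 0) = replicate j' 0 @ replicate i' (Suc 0)"
  have 1: "j = j'" using arg_cong[OF e, of "\<lambda>s. length (filter (\<lambda>x. x = 0) s)"] by simp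
  have 2: "i = i'" using arg_cong[OF e, of "\<lambda>s. length (filter (\<lambda>x. x = Suc 0) s)"] by simp
  show "j = j' \<and> i = i'" using 1 2 by simp
qed


lemma Tm_nodes_card: "(m+1) * m \<le> card (stree_nodes (Tm m))"
proof -
  have "(m+1) * m = card ((\<lambda>(j,i). replicate j (0::nat) @ replicate i 1) ` ({0..m} \<times> {0..<m}))"
    by (subst card_image[OF ZR_inj]) simp
  also have "\<dots> \<le> card (stree_nodes (Tm m))"
    unfolding stree_nodes_def
    by (rule card_mono[OF fin_nodes[OF Tm_trie]]) (auto intro: Tm_node[unfolded One_nat_def])
  finally show ?thesis .
qed

lemma Tm_edges_card: "(m+1) * (m - 1) \<le> card (stree_edges (Tm m))"
proof -
  let ?f = "\<lambda>(j,i). replicate j (0::nat) @ replicate i 1"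
  let ?g = "\<lambda>(j,i). (replicate j (0::nat) @ replicate (i - 1) 1, replicate j (0::nat) @ replicate i 1)"
  have inj: "inj_on ?g ({0..m} \<times> {1..<m})"
  proof (rule inj_onI)
    fix p q assume "p \<in> {0..m} \<times> {1..<m}" "q \<in> {0..m} \<times> {1..<m}" "?g p = ?g q"
    hence "?f p = ?f q" by (auto split: prod.splits)
    thus "p = q" using ZR_inj[of UNIV] by (auto dest: inj_onD)
  qed
  have "(m+1) * (m - 1) = card (?g ` ({0..m} \<times> {1..<m}))"
    by (subst card_image[OF inj]) simp
  also have "\<dots> \<le> card (stree_edges (Tm m))"
    unfolding stree_edges_def
  proof (rule card_mono[OF fin_edges[OF fin_nodes[OF Tm_trie]]], rule subsetI)
    fix p assume "p \<in> ?g ` ({0..m} \<times> {1..<m})"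
    then obtain j i where p: "p = ?g (j,i)" and j: "j \<le> m" and i1: "Suc 0 \<le> i" and im: "i < m" by auto
    let ?X = "replicate j (0::nat) @ replicate (i - 1) 1" and ?Y = "replicate j (0::nat) @ replicate i 1"
    have Y: "?Y = ?X @ [1]" using i1 by (cases i) (auto simp: replicate_append_same)
    have nX: "?X \<in> ct_nodes (trie_suffixes (Tm m))" using Tm_node[OF j, of "i-1"] im by simp
    have nY: "?Y \<in> ct_nodes (trie_suffixes (Tm m))" using Tm_node[OF j im] by simp
    have sp: "strict_pre ?X ?Y" unfolding strict_pre_def by (subst Y) simp
    have nb: "\<forall>Z\<in>ct_nodes (trie_suffixes (Tm m)). \<not> (strict_pre ?X Z \<and> strict_pre Z ?Y)"
      unfolding strict_pre_def by (subst Y) auto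
    show "p \<in> ct_edges (trie_suffixes (Tm m))"
      unfolding ct_edges_def p using nX nY sp nb by simp
  qed
  finally show ?thesis .
qed

lemma part2: "\<exists>\<Sigma>::nat set. finite \<Sigma> \<and> (\<exists>c::real. c > 0 \<and>
            (\<forall>N. \<exists>T. is_trie \<Sigma> T \<and> card T \<ge> N \<and>
               real (card (stree_nodes T)) \<ge> c * real ((card T)^2) \<and>
               real (card (stree_edges T)) \<ge> c * real ((card T)^2)))"
proof (intro exI[of _ "{0,1,2}"] conjI exI[of _ "1/18"] allI)
  show "finite {0,1,2::nat}" by simp
  show "(0::real) < 1/18" by simp
  fix N :: nat
  let ?m = "N + 3"
  let ?n = "card (Tm ?m)"
  have n1: "?n \<le> 3 * (?m + 1)" by (rule Tm_card_le)
  have n2: "?m + 1 \<le> ?n" by (rule Tm_card_ge)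
  have sq: "?n^2 \<le> (3 * (?m + 1))^2" using n1 by (rule power_mono) simp
  have key: "(3 * (?m + 1))^2 \<le> 18 * ((?m+1) * (?m - 1))"
    by (simp add: power2_eq_square algebra_simps)
  have e: "18 * ((?m+1) * (?m - 1)) \<le> 18 * card (stree_edges (Tm ?m))"
    using Tm_edges_card[of ?m] by simp
  have v: "18 * ((?m+1) * (?m - 1)) \<le> 18 * card (stree_nodes (Tm ?m))"
  proof -
    have "(?m+1) * (?m - 1) \<le> (?m+1) * ?m" by (intro mult_le_mono) auto
    thus ?thesis using Tm_nodes_card[of ?m] by linarith
  qed
  have E: "?n^2 \<le> 18 * card (stree_edges (Tm ?m))" using sq key e by linarith
  have V: "?n^2 \<le> 18 * card (stree_nodes (Tm ?m))" using sq key v by linarith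
  have E': "real (?n^2) \<le> 18 * real (card (stree_edges (Tm ?m)))"
    using E by (metis of_nat_le_iff of_nat_mult of_nat_numeral)
  have V': "real (?n^2) \<le> 18 * real (card (stree_nodes (Tm ?m)))"
    using V by (metis of_nat_le_iff of_nat_mult of_nat_numeral)
  show "\<exists>T. is_trie {0,1,2} T \<and> card T \<ge> N \<and>
               real (card (stree_nodes T)) \<ge> 1/18 * real ((card T)^2) \<and>
               real (card (stree_edges T)) \<ge> 1/18 * real ((card T)^2)"
    apply (rule exI[of _ "Tm ?m"])
    using Tm_trie[of ?m] n2 E' V' by auto
qed

theorem theorem1:
  shows "(\<exists>c::nat. \<forall>\<Sigma> T. is_trie \<Sigma> T \<longrightarrow>
            card (stree_nodes T) \<le> c * (card T)^2 \<and>
            card (stree_edges T) \<le> c * (card T)^2)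
       \<and> (\<exists>\<Sigma>::nat set. finite \<Sigma> \<and> (\<exists>c::real. c > 0 \<and>
            (\<forall>N. \<exists>T. is_trie \<Sigma> T \<and> card T \<ge> N \<and>
               real (card (stree_nodes T)) \<ge> c * real ((card T)^2) \<and>
               real (card (stree_edges T)) \<ge> c * real ((card T)^2))))"
  using part1 part2 by blast

end
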